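(* Let $d\in\mathbb N$ and $\varepsilon\in(0,1)$, let $h=h(d,\varepsilon)$ be the height and $\mathcal P^d_\varepsilon$ the set of leaves of Thiémard's decomposition process (see context), and let $f:[0,1)\to[1,\infty)$ be $$f(x)=1+\sum_{k=1}^\infty\frac{(k-\frac1d)(k-1-\frac1d)\cdots(1-\frac1d)}{(k+1)!}\,x^k .$$ Then $$h\le\left\lceil\frac{d(\varepsilon^{-1}-1)}{f(\varepsilon)}\right\rceil\qquad\text{and in particular}\qquad h\le\left\lceil\frac{d(\varepsilon^{-1}-1)}{1+\frac{d-1}{2d}\varepsilon}\right\rceil .$$ Furthermore, if $d=2$, $$|\mathcal P^2_\varepsilon|\le 2\Big(\frac{\varepsilon^{-1}-1}{f(\varepsilon)}+\frac32\Big)\Big(\frac{\varepsilon^{-1}-1}{f(\varepsilon)}+1\Big),$$ and if $d\ge3$, $$|\mathcal P^d_\varepsilon|\le\frac{d^d}{d!}\Big(\frac{\varepsilon^{-1}-1}{f(\varepsilon)}+\frac12\Big(1+\frac3d\Big)\Big)^d .$$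
   Context: Fix $d\in\mathbb N$ and $\varepsilon\in(0,1]$. For $x,y\in[0,1]^d$ write $[x,y)=\prod_{i=1}^d[x_i,y_i)$ and define the weight $W([x,y))=\prod_{i=1}^d y_i-\prod_{i=1}^d x_i$. Thiémard's decomposition process generates boxes, each with a type in $\{1,\dots,d+1\}$. It starts with $I^d=[0,1)^d=[(0,\dots,0),(1,\dots,1))$, of type $1$. Whenever a generated box $P=[\alpha,\beta)$ has type $j\le d$ and $W(P)>\varepsilon$, it is decomposed (procedure DECOMPOSE$(P,j)$) as follows: put $$\delta^P=\left(\frac{\prod_{i=1}^d\beta_i-\varepsilon}{\prod_{i=1}^{j-1}\alpha_i\prod_{i=j}^d\beta_i}\right)^{1/(d-j+1)},\qquad \gamma^P_i=\alpha_i\ (i<j),\quad \gamma^P_i=\delta^P\beta_i\ (i\ge j).$$ The children of $P$ are the boxes $Q^P_k=[a^{(k)},b^{(k)})$ for $k=j,\dots,d$, where $a^{(k)}_i=\gamma^P_i$ for $i<k$, $a^{(k)}_i=\alpha_i$ for $i\ge k$, $b^{(k)}_k=\gamma^P_k$, $b^{(k)}_i=\beta_i$ for $i\neq k$; the box $Q^P_k$ has type $k$. In addition $P$ has the child $Q^P_{d+1}=[\gamma^P,\beta)$ of type $d+1$. A generated box of type $d+1$ or of weight at most $\varepsilon$ is not decomposed. (Known facts from Thiémard: $\delta^P\in(0,1)$; the process terminates after finitely many steps; $W(Q^P_{d+1})=\varepsilon$ and $W(Q^P_k)=\delta^PW(P)$ for $j\le k\le d$.) $\mathcal P^d_\varepsilon$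 denotes the set of all generated boxes that are not decomposed (the leaves of the process). Indexing: for $r\in\mathbb N$ let $S^r=\{\boldsymbol i\in\mathbb N^r: 1\le i_1\le\dots\le i_r\le d\}$, $S^0=\{0\}$. Put $Q^{(0)}_0=I^d$, $Q^{(1)}_{j_1}=Q^{I^d}_{j_1}$ ($j_1=1,\dots,d$, defined when $W(I^d)>\varepsilon$), and for $\boldsymbol j\in S^r$ with $Q^{(r)}_{\boldsymbol j}$ generated and $W(Q^{(r)}_{\boldsymbol j})>\varepsilon$, $Q^{(r+1)}_{(\boldsymbol j,j_{r+1})}=Q^{Q^{(r)}_{\boldsymbol j}}_{j_{r+1}}$ for $j_{r+1}=j_r,\dots,d$. The height $h=h(d,\varepsilon)$ of the partition is $0$ if $W(I^d)\le\varepsilon$, and otherwise the largest $h\in\mathbb N$ such that there is $\boldsymbol j\in S^{h-1}$ with $Q^{(h-1)}_{\boldsymbol j}$ generated and $W(Q^{(h-1)}_{\boldsymbol j})>\varepsilon$. *)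

theory Defs
  imports "HOL-Analysis.Analysis"
begin

text \<open>Points of [0,1]^d are represented as functions nat \<Rightarrow> real; only the
coordinates 1..d are relevant.\<close>

definition tbox :: "nat \<Rightarrow> (nat \<Rightarrow> real) \<Rightarrow> (nat \<Rightarrow> real) \<Rightarrow> (nat \<Rightarrow> real) set" where
  "tbox d x y = {z. \<forall>i\<in>{1..d}. x i \<le> z i \<and> z i < y i}"

definition tweight :: "nat \<Rightarrow> (nat \<Rightarrow> real) \<Rightarrow> (nat \<Rightarrow> real) \<Rightarrow> real" where
  "tweight d x y = (\<Prod>i\<in>{1..d}. y i) - (\<Prod>i\<in>{1..d}. x i)"

definition tdelta :: "nat \<Rightarrow> real \<Rightarrow> (nat \<Rightarrow> real) \<Rightarrow> (nat \<Rightarrow> real) \<Rightarrow> nat \<Rightarrow> real" where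
  "tdelta d \<epsilon> \<alpha> \<beta> j =
     (((\<Prod>i\<in>{1..d}. \<beta> i) - \<epsilon>) /
      ((\<Prod>i\<in>{1..<j}. \<alpha> i) * (\<Prod>i\<in>{j..d}. \<beta> i))) powr (1 / real (d - j + 1))"

definition tgamma :: "nat \<Rightarrow> real \<Rightarrow> (nat \<Rightarrow> real) \<Rightarrow> (nat \<Rightarrow> real) \<Rightarrow> nat \<Rightarrow> nat \<Rightarrow> real" where
  "tgamma d \<epsilon> \<alpha> \<beta> j i = (if i < j then \<alpha> i else tdelta d \<epsilon> \<alpha> \<beta> j * \<beta> i)"

definition tchild_a :: "nat \<Rightarrow> real \<Rightarrow> (nat \<Rightarrow> real) \<Rightarrow> (nat \<Rightarrow> real) \<Rightarrow> nat \<Rightarrow> nat \<Rightarrow> nat \<Rightarrow> real" where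
  "tchild_a d \<epsilon> \<alpha> \<beta> j k i = (if i < k then tgamma d \<epsilon> \<alpha> \<beta> j i else \<alpha> i)"

definition tchild_b :: "nat \<Rightarrow> real \<Rightarrow> (nat \<Rightarrow> real) \<Rightarrow> (nat \<Rightarrow> real) \<Rightarrow> nat \<Rightarrow> nat \<Rightarrow> nat \<Rightarrow> real" where
  "tchild_b d \<epsilon> \<alpha> \<beta> j k i = (if i = k then tgamma d \<epsilon> \<alpha> \<beta> j i else \<beta> i)"

text \<open>thiemard_gen d eps r alpha beta j: the box [alpha,beta) of type j is generated
at depth r of Thiemard's decomposition process.\<close>
inductive thiemard_gen :: "nat \<Rightarrow> real \<Rightarrow> nat \<Rightarrow> (nat \<Rightarrow> real) \<Rightarrow> (nat \<Rightarrow> real) \<Rightarrow> nat \<Rightarrow> bool"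
  for d :: nat and \<epsilon> :: real where
  root: "thiemard_gen d \<epsilon> 0 (\<lambda>_. 0) (\<lambda>_. 1) 1"
| child: "thiemard_gen d \<epsilon> r \<alpha> \<beta> j \<Longrightarrow> j \<le> d \<Longrightarrow> tweight d \<alpha> \<beta> > \<epsilon> \<Longrightarrow>
          j \<le> k \<Longrightarrow> k \<le> d \<Longrightarrow>
          thiemard_gen d \<epsilon> (Suc r) (tchild_a d \<epsilon> \<alpha> \<beta> j k) (tchild_b d \<epsilon> \<alpha> \<beta> j k) k"
| last: "thiemard_gen d \<epsilon> r \<alpha> \<beta> j \<Longrightarrow> j \<le> d \<Longrightarrow> tweight d \<alpha> \<beta> > \<epsilon> \<Longrightarrow>
          thiemard_gen d \<epsilon> (Suc r) (tgamma d \<epsilon> \<alpha> \<beta> j) \<beta> (Suc d)"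

definition thiemard_leaves :: "nat \<Rightarrow> real \<Rightarrow> (nat \<Rightarrow> real) set set" where
  "thiemard_leaves d \<epsilon> =
     {tbox d \<alpha> \<beta> | \<alpha> \<beta>. \<exists>r j. thiemard_gen d \<epsilon> r \<alpha> \<beta> j \<and>
                              (j = Suc d \<or> tweight d \<alpha> \<beta> \<le> \<epsilon>)}"

definition thiemard_height :: "nat \<Rightarrow> real \<Rightarrow> nat" where
  "thiemard_height d \<epsilon> =
     (if tweight d (\<lambda>_. 0) (\<lambda>_. 1) \<le> \<epsilon> then 0
      else (GREATEST h. h \<ge> 1 \<and> (\<exists>\<alpha> \<beta> j. j \<le> d \<and> thiemard_gen d \<epsilon> (h - 1) \<alpha> \<beta> j \<and>
                                           tweight d \<alpha> \<beta> > \<epsilon>)))"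

definition thiemard_f :: "nat \<Rightarrow> real \<Rightarrow> real" where
  "thiemard_f d x = 1 + (\<Sum>n. (\<Prod>i\<in>{1..Suc n}. (real i - 1 / real d)) / fact (Suc n + 1) * x ^ Suc n)"

end

theory Submission
  imports Defs "HOL-Library.Multiset"
begin


lemma root_pow:
  fixes x :: real assumes "0 < x" "n > 0"
  shows "(x powr (1 / real n)) ^ n = x"
  using assms by (simp add: powr_realpow[symmetric] powr_powr)

lemma gchoose_div: "(a gchoose k) = (\<Prod>i = 0..<k. a - of_nat i) / fact k"
  using gbinomial_mult_fact'[of a k] by (simp add: field_simps)

lemma aux_alg: "(s::real) * s = 1 \<Longrightarrow> a * (s * P) / F * (s * (-1) * (E * e)) = - (a * e) * (P / F * E)"
  by (simp add: field_simps)

lemma gchoose_term: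
  fixes a e :: real
  shows "(a gchoose Suc (Suc n)) * (- e) ^ Suc (Suc n)
       = - (a * e) * ((\<Prod>i\<in>{1..Suc n}. (real i - a)) / fact (Suc n + 1) * e ^ Suc n)"
proof -
  have "(\<Prod>i = 0..<Suc (Suc n). a - of_nat i) = a * (\<Prod>i\<in>{1..Suc n}. a - real i)"
  proof -
    have "{0..<Suc (Suc n)} = insert 0 {1..Suc n}" by auto
    then show ?thesis by simp
  qed
  also have "(\<Prod>i\<in>{1..Suc n}. a - real i) = (-1)^Suc n * (\<Prod>i\<in>{1..Suc n}. real i - a)"
    using prod_uminus[of "\<lambda>i. real i - a" "{1..Suc n}"] by simp
  finally have G: "(a gchoose Suc (Suc n)) = a * ((-1)^Suc n * (\<Prod>i\<in>{1..Suc n}. real i - a)) / fact (Suc (Suc n))"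
    by (simp only: gchoose_div)
  have E: "(- e) ^ Suc (Suc n) = (-1)^Suc n * (-1) * (e ^ Suc n * e)"
    by (metis mult.commute power_Suc power_minus)
  have S: "((-1::real)^Suc n) * ((-1)^Suc n) = 1"
    by (simp flip: power_mult_distrib)
  have F: "fact (Suc n + 1) = (fact (Suc (Suc n)) :: real)" by simp
  show ?thesis by (simp only: G E F aux_alg[OF S])
qed

lemma f_sums:
  assumes d: "d \<ge> 1" and e: "0 < \<epsilon>" "\<epsilon> < 1"
  shows "(\<lambda>n. (\<Prod>i\<in>{1..Suc n}. (real i - 1 / real d)) / fact (Suc n + 1) * \<epsilon> ^ Suc n)
           sums (real d * (1 - (1 - \<epsilon>) powr (1 / real d)) / \<epsilon> - 1)"
proof -
  define a where "a = 1 / real d"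
  define t where "t = (\<lambda>n. (\<Prod>i\<in>{1..Suc n}. (real i - a)) / fact (Suc n + 1) * \<epsilon> ^ Suc n)"
  define g where "g = (\<lambda>n. (a gchoose n) * (- \<epsilon>) ^ n)"
  define v where "v = (1 - \<epsilon>) powr a"
  have "g sums (1 + - \<epsilon>) powr a" unfolding g_def by (rule gen_binomial_real) (use e in simp)
  hence "g sums v" by (simp add: v_def)
  hence "(\<lambda>n. g (Suc n)) sums (v - g 0)" using sums_Suc_iff[of g "v - g 0"] by simp
  hence "(\<lambda>n. g (Suc (Suc n))) sums (v - g 0 - g (Suc 0))"
    using sums_Suc_iff[of "\<lambda>n. g (Suc n)" "v - g 0 - g (Suc 0)"] by simp
  moreover have "g 0 = 1" "g (Suc 0) = - (a * \<epsilon>)" by (simp_all add: g_def)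
  moreover have "g (Suc (Suc n)) = - (a * \<epsilon>) * t n" for n
    unfolding g_def t_def by (rule gchoose_term)
  ultimately have "(\<lambda>n. - (a * \<epsilon>) * t n) sums (v - 1 + a * \<epsilon>)" by simp
  hence "(\<lambda>n. (- 1 / (a * \<epsilon>)) * (- (a * \<epsilon>) * t n)) sums ((- 1 / (a * \<epsilon>)) * (v - 1 + a * \<epsilon>))"
    by (rule sums_mult)
  moreover have "a * \<epsilon> \<noteq> 0" using d e by (simp add: a_def)
  ultimately have "t sums ((- 1 / (a * \<epsilon>)) * (v - 1 + a * \<epsilon>))" by simp
  moreover have "(- 1 / (a * \<epsilon>)) * (v - 1 + a * \<epsilon>) = real d * (1 - v) / \<epsilon> - 1"
    using d e by (simp add: a_def field_simps)
  ultimately show ?thesis by (simp add: t_def a_def v_def)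
qed

lemma f_props:
  assumes d: "d \<ge> 1" and e: "0 < \<epsilon>" "\<epsilon> < 1"
  shows "thiemard_f d \<epsilon> = real d * (1 - (1 - \<epsilon>) powr (1 / real d)) / \<epsilon>"
    and "1 + (real d - 1) / (2 * real d) * \<epsilon> \<le> thiemard_f d \<epsilon>"
proof -
  note S = f_sums[OF assms]
  show "thiemard_f d \<epsilon> = real d * (1 - (1 - \<epsilon>) powr (1 / real d)) / \<epsilon>"
    unfolding thiemard_f_def using sums_unique[OF S] by simp
  have nn: "0 \<le> (\<Prod>i\<in>{1..Suc n}. (real i - 1 / real d)) / fact (Suc n + 1) * \<epsilon> ^ Suc n" for n
  proof -
    have "0 \<le> (\<Prod>i\<in>{1..Suc n}. (real i - 1 / real d))"
    proof (rule prod_nonneg)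
      fix i assume "i \<in> {1..Suc n}"
      hence "1 \<le> real i" by simp
      moreover have "1 / real d \<le> 1" using d by simp
      ultimately show "0 \<le> real i - 1 / real d" by linarith
    qed
    thus ?thesis using e by simp
  qed
  define T where "T = (\<lambda>n. (\<Prod>i\<in>{1..Suc n}. (real i - 1 / real d)) / fact (Suc n + 1) * \<epsilon> ^ Suc n)"
  have "sum T {0} \<le> suminf T"
    by (rule sum_le_suminf) (use S nn in \<open>auto simp: sums_iff T_def\<close>)
  moreover have "T 0 = (real d - 1) / (2 * real d) * \<epsilon>"
    using d by (simp add: T_def field_simps numeral_2_eq_2)
  moreover have "thiemard_f d \<epsilon> = 1 + suminf T" by (simp add: thiemard_f_def T_def)
  ultimately show "1 + (real d - 1) / (2 * real d) * \<epsilon> \<le> thiemard_f d \<epsilon>"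
    by simp
qed



definition BB :: "nat \<Rightarrow> (nat \<Rightarrow> real) \<Rightarrow> real" where
  "BB d \<beta> = (\<Prod>i\<in>{1..d}. \<beta> i)"

definition CC :: "nat \<Rightarrow> (nat \<Rightarrow> real) \<Rightarrow> (nat \<Rightarrow> real) \<Rightarrow> nat \<Rightarrow> real" where
  "CC d \<alpha> \<beta> j = (\<Prod>i\<in>{1..d}. (if i < j then \<alpha> i else \<beta> i))"

lemma CC_split:
  assumes "1 \<le> j" "j \<le> Suc d"
  shows "(\<Prod>i\<in>{1..<j}. \<alpha> i) * (\<Prod>i\<in>{j..d}. \<beta> i) = CC d \<alpha> \<beta> j"
proof -
  have U: "{1..d} = {1..<j} \<union> {j..d}" using assms by auto
  have "CC d \<alpha> \<beta> j = (\<Prod>i\<in>{1..<j}. (if i < j then \<alpha> i else \<beta> i)) * (\<Prod>i\<in>{j..d}. (if i < j then \<alpha> i else \<beta> i))"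
    unfolding CC_def U by (rule prod.union_disjoint) auto
  also have "\<dots> = (\<Prod>i\<in>{1..<j}. \<alpha> i) * (\<Prod>i\<in>{j..d}. \<beta> i)"
    by (intro arg_cong2[where f="(*)"] prod.cong) auto
  finally show ?thesis by simp
qed

lemma prod_if_const:
  fixes x :: real
  assumes "A \<subseteq> S" "finite S"
  shows "(\<Prod>i\<in>S. if i \<in> A then x else 1) = x ^ card A"
proof -
  have "(\<Prod>i\<in>S. if i \<in> A then x else 1) = (\<Prod>i\<in>S \<inter> A. x)"
    by (rule prod.inter_restrict[symmetric]) fact
  also have "S \<inter> A = A" using assms by auto
  finally show ?thesis by simp
qed

lemma geo_step:
  fixes B e x v :: real and d :: nat
  assumes "d \<ge> 1" "0 < e" "e < 1" "0 \<le> x" "0 < B" "B \<le> 1" "x ^ d * B \<le> B - e"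
    "v = (1 - e) powr (1 / real d)"
  shows "1 - v \<le> B - x * B"
proof -
  have vpos: "0 < v" using assms by simp
  have vd: "v ^ d = 1 - e" using assms root_pow[of "1 - e" d] by simp
  have "x ^ d \<le> 1 - e / B" using assms by (simp add: field_simps)
  also have "\<dots> \<le> 1 - e" using assms by (simp add: field_simps mult_left_le)
  finally have "x ^ d \<le> v ^ d" using vd by simp
  hence xv: "x \<le> v"
    using power_le_imp_le_base[of x "d - 1" v] assms vpos by (simp add: Suc_diff_le)
  have v1: "v < 1"
  proof (rule ccontr)
    assume "\<not> v < 1" hence "1 \<le> v ^ d" using one_le_power by force
    thus False using vd assms by simp
  qed
  define S where "S = (\<lambda>y::real. \<Sum>i<d. y ^ i)"
  have Sx: "1 - x ^ d = (1 - x) * S x" unfolding S_def by (rule one_diff_power_eq)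
  have Sv: "1 - v ^ d = (1 - v) * S v" unfolding S_def by (rule one_diff_power_eq)
  have SxSv: "S x \<le> S v" unfolding S_def
    by (intro sum_mono power_mono) (use xv assms in auto)
  have Svpos: "0 < S v" unfolding S_def
    using assms vpos by (intro sum_pos) (auto simp: lessThan_empty_iff)
  have "e \<le> B * (1 - x ^ d)" using assms by (simp add: algebra_simps)
  also have "\<dots> = B * (1 - x) * S x" using Sx by simp
  also have "\<dots> \<le> B * (1 - x) * S v"
    using SxSv assms xv v1 by (intro mult_left_mono) auto
  finally have "(1 - v) * S v \<le> (B - x * B) * S v" using Sv vd by (simp add: algebra_simps)
  thus ?thesis using Svpos by simp
qed

lemma delta_facts:
  fixes \<alpha> \<beta> :: "nat \<Rightarrow> real"
  assumes d: "d \<ge> 1" and e: "0 < \<epsilon>" "\<epsilon> < 1" and j: "1 \<le> j" "j \<le> d"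
    and bpos: "\<forall>i\<in>{1..d}. 0 < \<beta> i"
    and th: "0 < \<theta>" "\<theta> \<le> 1" "\<forall>i\<in>{1..<j}. \<theta> * \<beta> i \<le> \<alpha> i"
    and BC: "BB d \<beta> - \<epsilon> \<le> \<theta> ^ (d - j + 1) * CC d \<alpha> \<beta> j"
    and Bgt: "\<epsilon> < BB d \<beta>" and Ble: "BB d \<beta> \<le> 1"
  shows "0 < tdelta d \<epsilon> \<alpha> \<beta> j \<and> tdelta d \<epsilon> \<alpha> \<beta> j \<le> \<theta>
       \<and> tdelta d \<epsilon> \<alpha> \<beta> j ^ (d - j + 1) * CC d \<alpha> \<beta> j = BB d \<beta> - \<epsilon>
       \<and> 1 - (1 - \<epsilon>) powr (1 / real d) \<le> BB d \<beta> - tdelta d \<epsilon> \<alpha> \<beta> j * BB d \<beta>"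
proof -
  define m where "m = d - j + 1"
  define C where "C = CC d \<alpha> \<beta> j"
  define B where "B = BB d \<beta>"
  define \<delta> where "\<delta> = tdelta d \<epsilon> \<alpha> \<beta> j"
  have mpos: "m > 0" by (simp add: m_def)
  have fac_pos: "0 < (if i < j then \<alpha> i else \<beta> i)" if "i \<in> {1..d}" for i
  proof (cases "i < j")
    case True
    hence "\<theta> * \<beta> i \<le> \<alpha> i" using th that by auto
    moreover have "0 < \<theta> * \<beta> i" using th bpos that by auto
    ultimately show ?thesis using True by simp
  next
    case False thus ?thesis using bpos that by auto
  qed
  have Cpos: "0 < C" unfolding C_def CC_def by (rule prod_pos) (use fac_pos in auto)
  have Bpos: "0 < B" using Bgt e by (simp add: B_def)
  have "(\<Prod>i\<in>{1..d}. (if i \<in> {1..<j} then \<theta> else 1) * \<beta> i) \<le> C"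
    unfolding C_def CC_def
  proof (rule prod_mono)
    fix i assume i: "i \<in> {1..d}"
    show "0 \<le> (if i \<in> {1..<j} then \<theta> else 1) * \<beta> i \<and> (if i \<in> {1..<j} then \<theta> else 1) * \<beta> i \<le> (if i < j then \<alpha> i else \<beta> i)"
    proof -
      have "0 < \<beta> i" using bpos i by blast
      moreover have "i < j \<Longrightarrow> \<theta> * \<beta> i \<le> \<alpha> i" using th(3) i by auto
      ultimately show ?thesis using th i by auto
    qed
  qed
  moreover have "(\<Prod>i\<in>{1..d}. (if i \<in> {1..<j} then \<theta> else 1) * \<beta> i) = \<theta> ^ (j - 1) * B"
    unfolding prod.distrib B_def BB_def using j by (subst prod_if_const) auto
  ultimately have CB: "\<theta> ^ (j - 1) * B \<le> C" by simp
  have dl: "\<delta> = ((B - \<epsilon>) / C) powr (1 / real m)"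
    unfolding \<delta>_def tdelta_def B_def[symmetric] BB_def[symmetric] m_def
    using CC_split[of j d \<alpha> \<beta>] j by (simp add: C_def)
  have qpos: "0 < (B - \<epsilon>) / C" using Cpos Bgt by (simp add: B_def)
  have dpos: "0 < \<delta>" using dl Cpos Bgt by (simp add: B_def)
  have dm: "\<delta> ^ m = (B - \<epsilon>) / C" using dl root_pow[OF qpos mpos] by simp
  hence dmC: "\<delta> ^ m * C = B - \<epsilon>" using Cpos by simp
  have "\<delta> ^ m * C \<le> \<theta> ^ m * C" using dmC BC by (simp add: B_def C_def m_def)
  hence "\<delta> ^ m \<le> \<theta> ^ m" using Cpos by simp
  hence dth: "\<delta> \<le> \<theta>"
    using power_le_imp_le_base[of \<delta> "m - 1" \<theta>] mpos th by simp
  have "\<delta> ^ d * B = \<delta> ^ m * (\<delta> ^ (j - 1) * B)"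
  proof -
    have "d = m + (j - 1)" using j by (simp add: m_def)
    hence "\<delta> ^ d = \<delta> ^ m * \<delta> ^ (j - 1)" by (metis power_add)
    thus ?thesis by simp
  qed
  also have "\<dots> \<le> \<delta> ^ m * (\<theta> ^ (j - 1) * B)"
    using dpos dth Bpos by (intro mult_left_mono mult_right_mono power_mono) auto
  also have "\<dots> \<le> \<delta> ^ m * C"
    using CB dpos by (intro mult_left_mono) auto
  finally have "\<delta> ^ d * B \<le> B - \<epsilon>" using dmC by simp
  hence "1 - (1 - \<epsilon>) powr (1 / real d) \<le> B - \<delta> * B"
    using geo_step[OF d e _ Bpos _ _ refl, of \<delta>] dpos Ble by (simp add: B_def)
  thus ?thesis using dpos dth dmC by (simp add: \<delta>_def B_def C_def m_def)
qed

definition Inv :: "nat \<Rightarrow> real \<Rightarrow> nat \<Rightarrow> (nat \<Rightarrow> real) \<Rightarrow> (nat \<Rightarrow> real) \<Rightarrow> nat \<Rightarrow> bool" where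
  "Inv d \<epsilon> r \<alpha> \<beta> j \<longleftrightarrow> 1 \<le> j \<and> j \<le> Suc d \<and> (j \<le> d \<longrightarrow>
     (\<forall>i\<in>{1..d}. 0 < \<beta> i \<and> 0 \<le> \<alpha> i) \<and> (\<forall>i\<in>{j..d}. \<alpha> i = 0) \<and>
     (\<exists>\<theta>. 0 < \<theta> \<and> \<theta> \<le> 1 \<and> (\<forall>i\<in>{1..<j}. \<theta> * \<beta> i \<le> \<alpha> i) \<and>
          BB d \<beta> - \<epsilon> \<le> \<theta> ^ (d - j + 1) * CC d \<alpha> \<beta> j) \<and>
     BB d \<beta> \<le> 1 - real r * (1 - (1 - \<epsilon>) powr (1 / real d)))"

lemma c_nonneg:
  assumes "0 < \<epsilon>" "\<epsilon> < 1"
  shows "0 \<le> 1 - (1 - \<epsilon>) powr (1 / real d)"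
  using assms powr_le1[of "1 / real d" "1 - \<epsilon>"] by simp

lemma tweight_BB:
  assumes "1 \<le> j" "j \<le> d" "\<forall>i\<in>{j..d}. \<alpha> i = 0"
  shows "tweight d \<alpha> \<beta> = BB d \<beta>"
proof -
  have "(\<Prod>i\<in>{1..d}. \<alpha> i) = 0"
  proof (rule prod_zero)
    show "\<exists>a\<in>{1..d}. \<alpha> a = 0" using assms by (intro bexI[of _ d]) auto
  qed simp
  thus ?thesis by (simp add: tweight_def BB_def)
qed

lemma Inv_gen:
  assumes d: "d \<ge> 1" and e: "0 < \<epsilon>" "\<epsilon> < 1"
  shows "thiemard_gen d \<epsilon> r \<alpha> \<beta> j \<Longrightarrow> Inv d \<epsilon> r \<alpha> \<beta> j"
proof (induction rule: thiemard_gen.induct)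
  case root
  have "CC d (\<lambda>_. 0) (\<lambda>_. 1) 1 = 1" unfolding CC_def by (rule prod.neutral) auto
  moreover have "BB d (\<lambda>_. 1) = 1" by (simp add: BB_def)
  ultimately show ?case unfolding Inv_def using d e
    by (auto intro!: exI[of _ 1])
next
  case (last r \<alpha> \<beta> j)
  thus ?case by (simp add: Inv_def)
next
  case (child r \<alpha> \<beta> j k)
  define c where "c = 1 - (1 - \<epsilon>) powr (1 / real d)"
  have c0: "0 \<le> c" using c_nonneg[OF e] by (simp add: c_def)
  from child.IH child.hyps(2) have j1: "1 \<le> j" and bpos: "\<forall>i\<in>{1..d}. 0 < \<beta> i"
    and anonneg: "\<forall>i\<in>{1..d}. 0 \<le> \<alpha> i"
    and az: "\<forall>i\<in>{j..d}. \<alpha> i = 0" and Br: "BB d \<beta> \<le> 1 - real r * c"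
    unfolding Inv_def c_def by auto
  from child.IH child.hyps(2) obtain \<theta> where th: "0 < \<theta>" "\<theta> \<le> 1" "\<forall>i\<in>{1..<j}. \<theta> * \<beta> i \<le> \<alpha> i"
    and BC: "BB d \<beta> - \<epsilon> \<le> \<theta> ^ (d - j + 1) * CC d \<alpha> \<beta> j"
    unfolding Inv_def by blast
  have Bgt: "\<epsilon> < BB d \<beta>" using child.hyps(3) tweight_BB[OF j1 child.hyps(2) az] by simp
  have Ble: "BB d \<beta> \<le> 1" using Br c0 by (smt (verit) mult_nonneg_nonneg of_nat_0_le_iff)
  define \<delta> where "\<delta> = tdelta d \<epsilon> \<alpha> \<beta> j"
  from delta_facts[OF d e j1 child.hyps(2) bpos th BC Bgt Ble]
  have dpos: "0 < \<delta>" and dth: "\<delta> \<le> \<theta>" and dmC: "\<delta> ^ (d - j + 1) * CC d \<alpha> \<beta> j = BB d \<beta> - \<epsilon>"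
    and dec: "c \<le> BB d \<beta> - \<delta> * BB d \<beta>"
    unfolding \<delta>_def c_def by auto
  have d1: "\<delta> \<le> 1" using dth th by simp
  have jk: "j \<le> k" "k \<le> d" by fact+
  define \<alpha>' where "\<alpha>' = tchild_a d \<epsilon> \<alpha> \<beta> j k"
  define \<beta>' where "\<beta>' = tchild_b d \<epsilon> \<alpha> \<beta> j k"
  have b': "\<beta>' i = (if i \<in> {k} then \<delta> else 1) * \<beta> i" for i
    using jk by (auto simp: \<beta>'_def tchild_b_def tgamma_def \<delta>_def)
  have a': "\<alpha>' i = (if i < k then (if i < j then \<alpha> i else \<delta> * \<beta> i) else \<alpha> i)" for i
    by (auto simp: \<alpha>'_def tchild_a_def tgamma_def \<delta>_def)
  have BB': "BB d \<beta>' = \<delta> * BB d \<beta>"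
    unfolding BB_def b' prod.distrib using jk j1 by (subst prod_if_const) auto
  have CC': "CC d \<alpha>' \<beta>' k = \<delta> ^ (Suc k - j) * CC d \<alpha> \<beta> j"
  proof -
    have "CC d \<alpha>' \<beta>' k = (\<Prod>i\<in>{1..d}. (if i \<in> {j..k} then \<delta> else 1) * (if i < j then \<alpha> i else \<beta> i))"
      unfolding CC_def by (rule prod.cong) (use jk in \<open>auto simp: a' b'\<close>)
    also have "\<dots> = \<delta> ^ (Suc k - j) * CC d \<alpha> \<beta> j"
      unfolding prod.distrib CC_def[symmetric] using jk j1 by (subst prod_if_const) auto
    finally show ?thesis .
  qed
  have pw: "\<delta> ^ (d - k + 1) * \<delta> ^ (Suc k - j) = \<delta> * \<delta> ^ (d - j + 1)"
  proof -
    have "d - k + 1 + (Suc k - j) = Suc (d - j + 1)" using jk by simp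
    thus ?thesis by (metis power_add power_Suc)
  qed
  have I4: "BB d \<beta>' - \<epsilon> \<le> \<delta> ^ (d - k + 1) * CC d \<alpha>' \<beta>' k"
  proof -
    have "\<delta> ^ (d - k + 1) * CC d \<alpha>' \<beta>' k = \<delta> * (\<delta> ^ (d - j + 1) * CC d \<alpha> \<beta> j)"
      using pw by (simp add: CC' mult.assoc[symmetric])
    also have "\<dots> = \<delta> * (BB d \<beta> - \<epsilon>)" using dmC by simp
    finally have eq: "\<delta> ^ (d - k + 1) * CC d \<alpha>' \<beta>' k = \<delta> * (BB d \<beta> - \<epsilon>)" .
    have "\<delta> * \<epsilon> \<le> \<epsilon>" using d1 e by (simp add: mult_left_le_one_le)
    hence "BB d \<beta>' - \<epsilon> \<le> \<delta> * BB d \<beta> - \<delta> * \<epsilon>" using BB' by linarith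
    also have "\<dots> = \<delta> * (BB d \<beta> - \<epsilon>)" by (simp add: algebra_simps)
    finally show ?thesis using eq by (simp only:)
  qed
  have th': "\<forall>i\<in>{1..<k}. \<delta> * \<beta>' i \<le> \<alpha>' i"
  proof
    fix i assume i: "i \<in> {1..<k}"
    show "\<delta> * \<beta>' i \<le> \<alpha>' i"
    proof (cases "i < j")
      case True
      hence "\<theta> * \<beta> i \<le> \<alpha> i" using th i by auto
      moreover have "\<delta> * \<beta> i \<le> \<theta> * \<beta> i" using dth bpos[rule_format, of i] i jk by (intro mult_right_mono) auto
      ultimately show ?thesis using True i by (simp add: a' b')
    next
      case False thus ?thesis using i by (simp add: a' b')
    qed
  qed
  have pos': "\<forall>i\<in>{1..d}. 0 < \<beta>' i \<and> 0 \<le> \<alpha>' i"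
    using bpos anonneg dpos by (auto simp: a' b' less_imp_le)
  have z': "\<forall>i\<in>{k..d}. \<alpha>' i = 0" using az jk by (auto simp: a')
  have B5: "BB d \<beta>' \<le> 1 - real (Suc r) * c" using BB' dec Br by (simp add: algebra_simps)
  show ?case unfolding Inv_def \<alpha>'_def[symmetric] \<beta>'_def[symmetric]
    using j1 jk pos' z' th' I4 B5 dpos d1 by (auto simp: c_def)
qed



lemma gen_j1: "thiemard_gen d \<epsilon> r \<alpha> \<beta> j \<Longrightarrow> 1 \<le> j"
  by (induction rule: thiemard_gen.induct) auto

lemma c_pos:
  assumes "d \<ge> 1" "0 < \<epsilon>" "\<epsilon> < 1"
  shows "0 < 1 - (1 - \<epsilon>) powr (1 / real d)"
  using assms powr01_less_one[of "1 - \<epsilon>" "1 / real d"] by simp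

lemma depth_bound:
  assumes d: "d \<ge> 1" and e: "0 < \<epsilon>" "\<epsilon> < 1"
    and g: "thiemard_gen d \<epsilon> r \<alpha> \<beta> j" and j: "j \<le> d" and w: "\<epsilon> < tweight d \<alpha> \<beta>"
  shows "real r < (1 - \<epsilon>) / (1 - (1 - \<epsilon>) powr (1 / real d))"
proof -
  define c where "c = 1 - (1 - \<epsilon>) powr (1 / real d)"
  have I: "Inv d \<epsilon> r \<alpha> \<beta> j" by (rule Inv_gen[OF d e g])
  hence "1 \<le> j" "\<forall>i\<in>{j..d}. \<alpha> i = 0" "BB d \<beta> \<le> 1 - real r * c"
    using j unfolding Inv_def c_def by auto
  hence "\<epsilon> < 1 - real r * c" using tweight_BB[of j d \<alpha> \<beta>] j w by simp
  moreover have "0 < c" using c_pos[OF d e] by (simp add: c_def)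
  ultimately show ?thesis by (simp add: c_def[symmetric] field_simps)
qed

definition HP :: "nat \<Rightarrow> real \<Rightarrow> nat \<Rightarrow> bool" where
  "HP d \<epsilon> h \<longleftrightarrow> h \<ge> 1 \<and> (\<exists>\<alpha> \<beta> j. j \<le> d \<and> thiemard_gen d \<epsilon> (h - 1) \<alpha> \<beta> j \<and> tweight d \<alpha> \<beta> > \<epsilon>)"

lemma height_props:
  assumes d: "d \<ge> 1" and e: "0 < \<epsilon>" "\<epsilon> < 1"
  shows "thiemard_height d \<epsilon> \<ge> 1"
    and "real (thiemard_height d \<epsilon>) - 1 < (1 - \<epsilon>) / (1 - (1 - \<epsilon>) powr (1 / real d))"
    and "\<And>h. HP d \<epsilon> h \<Longrightarrow> h \<le> thiemard_height d \<epsilon>"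
proof -
  define K where "K = (1 - \<epsilon>) / (1 - (1 - \<epsilon>) powr (1 / real d))"
  have w1: "tweight d (\<lambda>_. 0) (\<lambda>_. 1) = 1"
    using d by (simp add: tweight_def prod_zero)
  have hdef: "thiemard_height d \<epsilon> = Greatest (HP d \<epsilon>)"
    unfolding thiemard_height_def HP_def using w1 e by simp
  have "1 \<le> d \<and> thiemard_gen d \<epsilon> (1 - 1) (\<lambda>_. 0) (\<lambda>_. 1) 1 \<and> tweight d (\<lambda>_. 0) (\<lambda>_. 1) > \<epsilon>"
    using d e w1 thiemard_gen.root[of d \<epsilon>] by simp
  hence P1: "HP d \<epsilon> 1" unfolding HP_def by blast
  have bnd: "HP d \<epsilon> y \<Longrightarrow> real y - 1 < K" for y
  proof -
    assume "HP d \<epsilon> y"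
    then obtain \<alpha> \<beta> j where "y \<ge> 1" "j \<le> d" "thiemard_gen d \<epsilon> (y - 1) \<alpha> \<beta> j" "tweight d \<alpha> \<beta> > \<epsilon>"
      unfolding HP_def by blast
    with depth_bound[OF d e] have "real (y - 1) < K" unfolding K_def by blast
    thus ?thesis using \<open>y \<ge> 1\<close> by (simp add: of_nat_diff)
  qed
  have bnd2: "HP d \<epsilon> y \<Longrightarrow> y \<le> nat \<lceil>K\<rceil> + 1" for y
  proof -
    assume "HP d \<epsilon> y"
    hence "real y < K + 1" using bnd by force
    thus "y \<le> nat \<lceil>K\<rceil> + 1" by linarith
  qed
  have PG: "HP d \<epsilon> (Greatest (HP d \<epsilon>))" using P1 bnd2 by (rule GreatestI_nat)
  show "thiemard_height d \<epsilon> \<ge> 1" using PG hdef unfolding HP_def by simp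
  show "real (thiemard_height d \<epsilon>) - 1 < K" using bnd[OF PG] hdef by simp
  show "\<And>h. HP d \<epsilon> h \<Longrightarrow> h \<le> thiemard_height d \<epsilon>"
    using Greatest_le_nat[of "HP d \<epsilon>" _ "nat \<lceil>K\<rceil> + 1"] bnd2 hdef by simp
qed

lemma K_eq:
  assumes d: "d \<ge> 1" and e: "0 < \<epsilon>" "\<epsilon> < 1"
  shows "(1 - \<epsilon>) / (1 - (1 - \<epsilon>) powr (1 / real d)) = real d * (1 / \<epsilon> - 1) / thiemard_f d \<epsilon>"
proof -
  have c: "0 < 1 - (1 - \<epsilon>) powr (1 / real d)" by (rule c_pos[OF assms])
  show ?thesis unfolding f_props(1)[OF assms] using c d e by (simp add: field_simps)
qed

lemma height_main:
  assumes d: "d \<ge> 1" and e: "0 < \<epsilon>" "\<epsilon> < 1"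
  shows "real (thiemard_height d \<epsilon>) < real d * (1 / \<epsilon> - 1) / thiemard_f d \<epsilon> + 1"
    and "int (thiemard_height d \<epsilon>) \<le> \<lceil>real d * (1 / \<epsilon> - 1) / thiemard_f d \<epsilon>\<rceil>"
    and "int (thiemard_height d \<epsilon>)
           \<le> \<lceil>real d * (1 / \<epsilon> - 1) / (1 + (real d - 1) / (2 * real d) * \<epsilon>)\<rceil>"
proof -
  have lt: "real (thiemard_height d \<epsilon>) - 1 < real d * (1 / \<epsilon> - 1) / thiemard_f d \<epsilon>"
    using height_props(2)[OF assms] K_eq[OF assms] by simp
  thus "real (thiemard_height d \<epsilon>) < real d * (1 / \<epsilon> - 1) / thiemard_f d \<epsilon> + 1" by simp
  show h1: "int (thiemard_height d \<epsilon>) \<le> \<lceil>real d * (1 / \<epsilon> - 1) / thiemard_f d \<epsilon>\<rceil>"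
    using lt by (simp add: le_ceiling_iff)
  have "0 \<le> (real d - 1) / (2 * real d) * \<epsilon>" using d e by simp
  hence g0: "0 < 1 + (real d - 1) / (2 * real d) * \<epsilon>" by linarith
  have "real d * (1 / \<epsilon> - 1) / thiemard_f d \<epsilon> \<le> real d * (1 / \<epsilon> - 1) / (1 + (real d - 1) / (2 * real d) * \<epsilon>)"
  proof (rule divide_left_mono)
    show "1 + (real d - 1) / (2 * real d) * \<epsilon> \<le> thiemard_f d \<epsilon>" by (rule f_props(2)[OF assms])
    show "0 \<le> real d * (1 / \<epsilon> - 1)" using e by simp
    show "0 < thiemard_f d \<epsilon> * (1 + (real d - 1) / (2 * real d) * \<epsilon>)"
      using f_props(2)[OF assms] g0 by (intro mult_pos_pos) linarith+
  qed
  hence "\<lceil>real d * (1 / \<epsilon> - 1) / thiemard_f d \<epsilon>\<rceil> \<le> \<lceil>real d * (1 / \<epsilon> - 1) / (1 + (real d - 1) / (2 * real d) * \<epsilon>)\<rceil>"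
    by (rule ceiling_mono)
  with h1 show "int (thiemard_height d \<epsilon>)
           \<le> \<lceil>real d * (1 / \<epsilon> - 1) / (1 + (real d - 1) / (2 * real d) * \<epsilon>)\<rceil>" by simp
qed


definition nstep :: "nat \<Rightarrow> real \<Rightarrow> nat \<Rightarrow> (nat \<Rightarrow> real) \<times> (nat \<Rightarrow> real) \<times> nat \<Rightarrow> (nat \<Rightarrow> real) \<times> (nat \<Rightarrow> real) \<times> nat" where
  "nstep d \<epsilon> c s = (case s of (\<alpha>, \<beta>, j) \<Rightarrow>
     if j \<le> d \<and> \<epsilon> < tweight d \<alpha> \<beta> then
       (if j \<le> c \<and> c \<le> d then (tchild_a d \<epsilon> \<alpha> \<beta> j c, tchild_b d \<epsilon> \<alpha> \<beta> j c, c)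
        else if c = Suc d then (tgamma d \<epsilon> \<alpha> \<beta> j, \<beta>, Suc d) else s)
     else s)"

lemma reach:
  "thiemard_gen d \<epsilon> r \<alpha> \<beta> j \<Longrightarrow> \<exists>xs. length xs = r \<and> sorted xs \<and> set xs \<subseteq> {1..Suc d}
      \<and> (\<forall>x\<in>set xs. x \<le> j) \<and> 1 \<le> j \<and> fold (nstep d \<epsilon>) xs ((\<lambda>_. 0), (\<lambda>_. 1), 1) = (\<alpha>, \<beta>, j)"
proof (induction rule: thiemard_gen.induct)
  case root
  show ?case by (intro exI[of _ "[]"]) simp
next
  case (child r \<alpha> \<beta> j k)
  then obtain xs where xs: "length xs = r" "sorted xs" "set xs \<subseteq> {1..Suc d}" "\<forall>x\<in>set xs. x \<le> j" "1 \<le> j"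
    "fold (nstep d \<epsilon>) xs ((\<lambda>_. 0), (\<lambda>_. 1), 1) = (\<alpha>, \<beta>, j)" by blast
  show ?case
  proof (intro exI[of _ "xs @ [k]"] conjI)
    show "sorted (xs @ [k])" using xs child.hyps by (auto simp: sorted_append)
    show "fold (nstep d \<epsilon>) (xs @ [k]) ((\<lambda>_. 0), (\<lambda>_. 1), 1) = (tchild_a d \<epsilon> \<alpha> \<beta> j k, tchild_b d \<epsilon> \<alpha> \<beta> j k, k)"
      using xs child.hyps by (simp add: nstep_def)
  qed (use xs child.hyps in auto)
next
  case (last r \<alpha> \<beta> j)
  then obtain xs where xs: "length xs = r" "sorted xs" "set xs \<subseteq> {1..Suc d}" "\<forall>x\<in>set xs. x \<le> j" "1 \<le> j"
    "fold (nstep d \<epsilon>) xs ((\<lambda>_. 0), (\<lambda>_. 1), 1) = (\<alpha>, \<beta>, j)" by blast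
  show ?case
  proof (intro exI[of _ "xs @ [Suc d]"] conjI)
    show "sorted (xs @ [Suc d])" using xs last.hyps by (auto simp: sorted_append)
    show "fold (nstep d \<epsilon>) (xs @ [Suc d]) ((\<lambda>_. 0), (\<lambda>_. 1), 1) = (tgamma d \<epsilon> \<alpha> \<beta> j, \<beta>, Suc d)"
      using xs last.hyps by (simp add: nstep_def)
  qed (use xs last.hyps in auto)
qed

lemma fold_leaf:
  assumes "\<not> (j \<le> d \<and> \<epsilon> < tweight d \<alpha> \<beta>)"
  shows "fold (nstep d \<epsilon>) (replicate n c) (\<alpha>, \<beta>, j) = (\<alpha>, \<beta>, j)"
  using assms by (induction n) (auto simp: nstep_def)

lemma depth_le_height:
  assumes d: "d \<ge> 1" and e: "0 < \<epsilon>" "\<epsilon> < 1" and g: "thiemard_gen d \<epsilon> r \<alpha> \<beta> j"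
  shows "r \<le> thiemard_height d \<epsilon>"
proof (cases r)
  case 0 thus ?thesis by simp
next
  case (Suc r')
  from g[unfolded Suc] have "HP d \<epsilon> (Suc r')"
  proof cases
    case (child \<alpha>0 \<beta>0 j0)
    hence "j0 \<le> d" by linarith
    hence "j0 \<le> d \<and> thiemard_gen d \<epsilon> (Suc r' - 1) \<alpha>0 \<beta>0 j0 \<and> \<epsilon> < tweight d \<alpha>0 \<beta>0"
      using child by simp
    hence "\<exists>\<alpha> \<beta> j. j \<le> d \<and> thiemard_gen d \<epsilon> (Suc r' - 1) \<alpha> \<beta> j \<and> \<epsilon> < tweight d \<alpha> \<beta>"
      by (intro exI)
    thus ?thesis unfolding HP_def by simp
  next
    case (last \<alpha>0 j0)
    thus ?thesis unfolding HP_def by auto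
  qed
  thus ?thesis using height_props(3)[OF d e] Suc by blast
qed

definition leafmap :: "nat \<Rightarrow> real \<Rightarrow> nat multiset \<Rightarrow> (nat \<Rightarrow> real) set" where
  "leafmap d \<epsilon> M = (case fold (nstep d \<epsilon>) (sorted_list_of_multiset M) ((\<lambda>_. 0), (\<lambda>_. 1), 1) of
      (\<alpha>, \<beta>, j) \<Rightarrow> tbox d \<alpha> \<beta>)"

lemma leaves_sub:
  assumes d: "d \<ge> 1" and e: "0 < \<epsilon>" "\<epsilon> < 1"
  shows "thiemard_leaves d \<epsilon> \<subseteq> leafmap d \<epsilon> ` multisets_of_size {1..Suc d} (thiemard_height d \<epsilon>)"
proof
  fix X assume "X \<in> thiemard_leaves d \<epsilon>"
  then obtain \<alpha> \<beta> r j where X: "X = tbox d \<alpha> \<beta>" and g: "thiemard_gen d \<epsilon> r \<alpha> \<beta> j"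
    and lf: "j = Suc d \<or> tweight d \<alpha> \<beta> \<le> \<epsilon>"
    unfolding thiemard_leaves_def by blast
  define h where "h = thiemard_height d \<epsilon>"
  have rh: "r \<le> h" unfolding h_def by (rule depth_le_height[OF d e g])
  obtain xs where xs: "length xs = r" "sorted xs" "set xs \<subseteq> {1..Suc d}" "\<forall>x\<in>set xs. x \<le> j" "1 \<le> j"
    "fold (nstep d \<epsilon>) xs ((\<lambda>_. 0), (\<lambda>_. 1), 1) = (\<alpha>, \<beta>, j)" using reach[OF g] by blast
  have jle: "j \<le> Suc d" using Inv_gen[OF d e g] by (simp add: Inv_def)
  define ys where "ys = xs @ replicate (h - r) (Suc d)"
  have ys_sorted: "sorted ys" unfolding ys_def using xs jle by (auto simp: sorted_append)
  have ys_fold: "fold (nstep d \<epsilon>) ys ((\<lambda>_. 0), (\<lambda>_. 1), 1) = (\<alpha>, \<beta>, j)"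
    unfolding ys_def using xs(6) fold_leaf[of j d \<epsilon> \<alpha> \<beta>] lf by auto
  have "mset ys \<in> multisets_of_size {1..Suc d} h"
    unfolding multisets_of_size_def ys_def using xs rh by auto
  moreover have "leafmap d \<epsilon> (mset ys) = X"
    unfolding leafmap_def sorted_list_of_multiset_mset sorted_sort_id[OF ys_sorted] ys_fold X by simp
  ultimately show "X \<in> leafmap d \<epsilon> ` multisets_of_size {1..Suc d} (thiemard_height d \<epsilon>)"
    unfolding h_def by blast
qed

lemma leaves_card:
  assumes d: "d \<ge> 1" and e: "0 < \<epsilon>" "\<epsilon> < 1"
  shows "finite (thiemard_leaves d \<epsilon>)"
    and "card (thiemard_leaves d \<epsilon>) \<le> (thiemard_height d \<epsilon> + d) choose d"
proof -
  define h where "h = thiemard_height d \<epsilon>"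
  have fin: "finite (multisets_of_size {1..Suc d} h)" by auto
  show "finite (thiemard_leaves d \<epsilon>)"
    using leaves_sub[OF assms] fin h_def by (meson finite_imageI finite_subset)
  have "card (thiemard_leaves d \<epsilon>) \<le> card (leafmap d \<epsilon> ` multisets_of_size {1..Suc d} h)"
    using leaves_sub[OF assms] fin h_def by (intro card_mono) auto
  also have "\<dots> \<le> card (multisets_of_size {1..Suc d} h)" by (rule card_image_le[OF fin])
  also have "\<dots> = (d + h) choose h" by (simp add: card_multisets_of_size)
  also have "\<dots> = (h + d) choose d" using binomial_symmetric[of h "d + h"] by (simp add: add.commute)
  finally show "card (thiemard_leaves d \<epsilon>) \<le> (thiemard_height d \<epsilon> + d) choose d" by (simp add: h_def)
qed


lemma binom_real: "real ((h + d) choose d) = (\<Prod>i<d. (real h + 1 + real i)) / fact d"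
proof -
  have "real ((h + d) choose d) = real (h + d) gchoose d" by (rule binomial_gbinomial)
  also have "\<dots> = pochhammer (real h + 1) d / fact d" by (simp add: gbinomial_pochhammer')
  also have "pochhammer (real h + 1) d = (\<Prod>i<d. (real h + 1 + real i))"
    by (simp add: pochhammer_prod atLeast0LessThan)
  finally show ?thesis .
qed

lemma pair_bound:
  fixes a x :: real assumes "0 \<le> a" "0 \<le> x" "x \<le> n - 1"
  shows "(a + x) * (a + (n - 1 - x)) \<le> (a + (n - 1) / 2) ^ 2"
proof -
  have "(a + x) * (a + (n - 1 - x)) = (a + (n - 1) / 2) ^ 2 - ((n - 1) / 2 - x) ^ 2"
    by (simp add: power2_eq_square algebra_simps)
  thus ?thesis by simp
qed

lemma amgm:
  fixes a :: real assumes a: "0 \<le> a"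
  shows "(\<Prod>i<n. (a + real i)) \<le> (a + (real n - 1) / 2) ^ n"
proof -
  define P where "P = (\<Prod>i<n. (a + real i))"
  have P0: "0 \<le> P" unfolding P_def using a by (intro prod_nonneg) auto
  have Q: "(\<Prod>i<n. (a + real (n - Suc i))) = P"
    unfolding P_def by (rule prod.nat_diff_reindex)
  have "P * P = (\<Prod>i<n. (a + real i) * (a + real (n - Suc i)))"
    using Q unfolding P_def by (simp add: prod.distrib)
  also have "\<dots> \<le> (\<Prod>i<n. (a + (real n - 1) / 2) ^ 2)"
  proof (rule prod_mono)
    fix i assume i: "i \<in> {..<n}"
    have "real (n - Suc i) = real n - 1 - real i" using i by (simp add: of_nat_diff)
    moreover have "(a + real i) * (a + (real n - 1 - real i)) \<le> (a + (real n - 1) / 2) ^ 2"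
      using i a by (intro pair_bound) auto
    ultimately show "0 \<le> (a + real i) * (a + real (n - Suc i)) \<and>
          (a + real i) * (a + real (n - Suc i)) \<le> (a + (real n - 1) / 2) ^ 2"
      using a by simp
  qed
  also have "\<dots> = ((a + (real n - 1) / 2) ^ n) ^ 2"
    by (simp add: power_mult[symmetric] mult.commute flip: power_mult)
  finally have "P ^ 2 \<le> ((a + (real n - 1) / 2) ^ n) ^ 2" by (simp add: power2_eq_square)
  moreover have "0 \<le> a + (real n - 1) / 2 \<or> n = 0" using a by auto
  ultimately show ?thesis unfolding P_def[symmetric]
    by (metis P0 power2_le_imp_le power_0 zero_le_power zero_le_one)
qed

theorem mainTheorem4:
  fixes d :: nat and \<epsilon> :: real
  assumes "d \<ge> 1" and "0 < \<epsilon>" and "\<epsilon> < 1"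
  shows "int (thiemard_height d \<epsilon>)
           \<le> \<lceil>real d * (1 / \<epsilon> - 1) / thiemard_f d \<epsilon>\<rceil>
       \<and> int (thiemard_height d \<epsilon>)
           \<le> \<lceil>real d * (1 / \<epsilon> - 1) / (1 + (real d - 1) / (2 * real d) * \<epsilon>)\<rceil>
       \<and> finite (thiemard_leaves d \<epsilon>)
       \<and> (d = 2 \<longrightarrow> real (card (thiemard_leaves d \<epsilon>))
              \<le> 2 * ((1 / \<epsilon> - 1) / thiemard_f d \<epsilon> + 3 / 2)
                  * ((1 / \<epsilon> - 1) / thiemard_f d \<epsilon> + 1))
       \<and> (d \<ge> 3 \<longrightarrow> real (card (thiemard_leaves d \<epsilon>))
              \<le> real d ^ d / fact d
                 * ((1 / \<epsilon> - 1) / thiemard_f d \<epsilon> + 1 / 2 * (1 + 3 / real d)) ^ d)"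
proof -
  define h where "h = thiemard_height d \<epsilon>"
  define H where "H = (1 / \<epsilon> - 1) / thiemard_f d \<epsilon>"
  have hlt: "real h < real d * H + 1"
    using height_main(1)[OF assms] unfolding h_def H_def by (simp add: times_divide_eq_right)
  have card: "real (card (thiemard_leaves d \<epsilon>)) \<le> (\<Prod>i<d. (real h + 1 + real i)) / fact d"
    using leaves_card(2)[OF assms] binom_real[of h d] unfolding h_def
    by (metis of_nat_le_iff)
  have D2: "d = 2 \<longrightarrow> real (card (thiemard_leaves d \<epsilon>)) \<le> 2 * (H + 3 / 2) * (H + 1)"
  proof
    assume d2: "d = 2"
    have "(\<Prod>i<d. (real h + 1 + real i)) = (real h + 1) * (real h + 2)"
      using d2 by (simp add: numeral_2_eq_2 lessThan_Suc)
    moreover have "(real h + 1) * (real h + 2) \<le> (2 * (H + 1)) * (2 * (H + 3 / 2))"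
      using hlt d2 by (intro mult_mono) auto
    ultimately have le: "(\<Prod>i<d. (real h + 1 + real i)) \<le> (2 * (H + 1)) * (2 * (H + 3 / 2))" by simp
    have f2: "fact d = (2::real)" using d2 by (simp add: numeral_2_eq_2)
    have eq: "(2 * (H + 1)) * (2 * (H + 3 / 2)) / 2 = 2 * (H + 3 / 2) * (H + 1)" by (simp add: algebra_simps)
    have "(\<Prod>i<d. (real h + 1 + real i)) / fact d \<le> (2 * (H + 1)) * (2 * (H + 3 / 2)) / 2"
      unfolding f2 using le by (simp add: divide_right_mono)
    hence "(\<Prod>i<d. (real h + 1 + real i)) / fact d \<le> 2 * (H + 3 / 2) * (H + 1)" by (simp only: eq)
    thus "real (card (thiemard_leaves d \<epsilon>)) \<le> 2 * (H + 3 / 2) * (H + 1)" using card by linarith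
  qed
  have D3: "d \<ge> 3 \<longrightarrow> real (card (thiemard_leaves d \<epsilon>))
              \<le> real d ^ d / fact d * (H + 1 / 2 * (1 + 3 / real d)) ^ d"
  proof
    assume d3: "d \<ge> 3"
    have "(\<Prod>i<d. (real h + 1 + real i)) \<le> (real h + 1 + (real d - 1) / 2) ^ d"
      by (rule amgm) simp
    also have "\<dots> \<le> (real d * (H + 1 / 2 * (1 + 3 / real d))) ^ d"
    proof (rule power_mono)
      show "real h + 1 + (real d - 1) / 2 \<le> real d * (H + 1 / 2 * (1 + 3 / real d))"
      proof -
        have eq: "real d * H + (real d + 3) / 2 = real d * (H + 1 / 2 * (1 + 3 / real d))"
          using d3 by (simp add: field_simps)
        have "real h + 1 + (real d - 1) / 2 \<le> real d * H + (real d + 3) / 2" using hlt by (simp add: field_simps)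
        thus ?thesis unfolding eq .
      qed
      show "0 \<le> real h + 1 + (real d - 1) / 2" using d3 by simp
    qed
    also have "\<dots> = real d ^ d * (H + 1 / 2 * (1 + 3 / real d)) ^ d" by (rule power_mult_distrib)
    finally have "(\<Prod>i<d. (real h + 1 + real i)) / fact d \<le> real d ^ d * (H + 1 / 2 * (1 + 3 / real d)) ^ d / fact d"
      by (simp add: divide_right_mono)
    thus "real (card (thiemard_leaves d \<epsilon>)) \<le> real d ^ d / fact d * (H + 1 / 2 * (1 + 3 / real d)) ^ d"
      using card by simp
  qed
  show ?thesis
    using height_main(2,3)[OF assms] leaves_card(1)[OF assms] D2 D3 unfolding H_def by simp
qed

end
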